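(* Assume $J$ is nondecreasing on $\Theta$. Define $\Phi(\theta_0)=\int_{\theta_0}^{\bar\theta}J(\theta)F(\theta)\,dF(\theta)+v(\theta_0)(1-F(\theta_0))$ for $\theta_0\in[0,\bar\theta)$, and let $\theta_0^*\in\arg\max_{\theta_0\in[0,\bar\theta)}\Phi(\theta_0)$. Then the pair $(\theta_0^*,s^* )$ with $s^*(\theta)=F(\theta)$ for $\theta\in[\theta_0^*,\bar\theta]$ maximizes $$R(\theta_0,s)=\int_{\theta_0}^{\bar\theta}J(\theta)s(\theta)\,dF(\theta)+v(\theta_0)(1-F(\theta_0))$$ over all $\theta_0\in[0,\bar\theta)$ and $s\in\mathcal S(\theta_0)$; i.e., the revenue-maximizing mechanism excludes types below $\theta_0^*$ and fully separates types above $\theta_0^*$.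
   Context: Let $0<\bar\theta<\infty$, $\Theta=[0,\bar\theta]$, $F$ a cdf on $\Theta$ with continuous, strictly positive density $f$, $dF=f\,d\theta$, and $J(\theta)=\theta-\frac{1-F(\theta)}{f(\theta)}$. The intrinsic value $v:\Theta\to[0,\infty)$ is twice continuously differentiable with $v'\ge0$, $v''\le0$. For $\theta_0\in[0,\bar\theta)$ and bounded measurable $a,b:[\theta_0,\bar\theta]\to\mathbb R$, write $b\in\mathrm{MPS}(a)$ on $[\theta_0,\bar\theta]$ if $\int_x^{\bar\theta}b\,dF\le\int_x^{\bar\theta}a\,dF$ for all $x\in[\theta_0,\bar\theta]$, with equality at $x=\theta_0$. Let $\mathcal S(\theta_0)$ be the set of nondecreasing $s:[\theta_0,\bar\theta]\to[0,1]$ with $s\in\mathrm{MPS}(F)$ on $[\theta_0,\bar\theta]$ (the feasible interim statuses of participants when types below $\theta_0$ are excluded). $R(\theta_0,s)$ is the seller's expected revenue of the optimal-price incentive-compatible, individually rational mechanism with participation cutoff $\theta_0$ and interim status $s$. *)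

theory Defs
  imports "HOL-Analysis.Analysis"
begin

definition virtual_value :: "(real \<Rightarrow> real) \<Rightarrow> (real \<Rightarrow> real) \<Rightarrow> real \<Rightarrow> real" where
  "virtual_value F f \<theta> = \<theta> - (1 - F \<theta>) / f \<theta>"

text \<open>b in MPS(a) on [theta0, thetabar], integrals taken w.r.t. dF = f dtheta.\<close>
definition mps :: "(real \<Rightarrow> real) \<Rightarrow> real \<Rightarrow> real \<Rightarrow> (real \<Rightarrow> real) \<Rightarrow> (real \<Rightarrow> real) \<Rightarrow> bool" where
  "mps f \<theta>0 \<theta>bar b a \<longleftrightarrow>
     (\<forall>x\<in>{\<theta>0..\<theta>bar}. integral {x..\<theta>bar} (\<lambda>t. b t * f t) \<le> integral {x..\<theta>bar} (\<lambda>t. a t * f t))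
     \<and> integral {\<theta>0..\<theta>bar} (\<lambda>t. b t * f t) = integral {\<theta>0..\<theta>bar} (\<lambda>t. a t * f t)"

definition feasible_status :: "(real \<Rightarrow> real) \<Rightarrow> (real \<Rightarrow> real) \<Rightarrow> real \<Rightarrow> real \<Rightarrow> (real \<Rightarrow> real) set" where
  "feasible_status F f \<theta>bar \<theta>0 =
     {s. mono_on {\<theta>0..\<theta>bar} s \<and> (\<forall>t\<in>{\<theta>0..\<theta>bar}. 0 \<le> s t \<and> s t \<le> 1) \<and> mps f \<theta>0 \<theta>bar s F}"

definition revenue :: "(real \<Rightarrow> real) \<Rightarrow> (real \<Rightarrow> real) \<Rightarrow> (real \<Rightarrow> real) \<Rightarrow> real \<Rightarrow> real \<Rightarrow> (real \<Rightarrow> real) \<Rightarrow> real" where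
  "revenue F f v \<theta>bar \<theta>0 s =
     integral {\<theta>0..\<theta>bar} (\<lambda>t. virtual_value F f t * s t * f t) + v \<theta>0 * (1 - F \<theta>0)"

end

theory Submission
  imports Defs
begin

lemma key_ineq:
  fixes J s F f :: "real \<Rightarrow> real" and a b :: real
  assumes ab: "a \<le> b"
    and Jm: "\<And>x y. \<lbrakk>a \<le> x; x \<le> y; y \<le> b\<rbrakk> \<Longrightarrow> J x \<le> J y"
    and sm: "\<And>x y. \<lbrakk>a \<le> x; x \<le> y; y \<le> b\<rbrakk> \<Longrightarrow> s x \<le> s y"
    and Fm: "\<And>x y. \<lbrakk>a \<le> x; x \<le> y; y \<le> b\<rbrakk> \<Longrightarrow> F x \<le> F y"
    and fi: "f integrable_on {a..b}"
    and m: "mps f a b s F"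
  shows "integral {a..b} (\<lambda>t. J t * s t * f t) \<le> integral {a..b} (\<lambda>t. J t * F t * f t)"
proof -
  obtain c1 where "c1 \<in> {a..b}" and
    "((\<lambda>x. s x * f x) has_integral (s a * integral {a..c1} f + s b * integral {c1..b} f)) {a..b}"
    using second_mean_value_theorem_full[OF fi ab, of s] sm by blast
  then have si: "(\<lambda>x. s x * f x) integrable_on {a..b}" by blast
  obtain c2 where "c2 \<in> {a..b}" and
    "((\<lambda>x. F x * f x) has_integral (F a * integral {a..c2} f + F b * integral {c2..b} f)) {a..b}"
    using second_mean_value_theorem_full[OF fi ab, of F] Fm by blast
  then have Fi: "(\<lambda>x. F x * f x) integrable_on {a..b}" by blast
  define g where "g = (\<lambda>x. F x * f x - s x * f x)"
  have gi: "g integrable_on {a..b}" unfolding g_def by (rule integrable_diff[OF Fi si])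
  obtain c where c: "c \<in> {a..b}" and
    hc: "((\<lambda>x. J x * g x) has_integral (J a * integral {a..c} g + J b * integral {c..b} g)) {a..b}"
    using second_mean_value_theorem_full[OF gi ab, of J] Jm by blast
  have g0: "integral {a..b} g = 0"
    using m si Fi unfolding mps_def g_def by (simp add: integral_diff)
  have gc: "integral {c..b} g \<ge> 0"
  proof -
    have "integral {c..b} (\<lambda>t. s t * f t) \<le> integral {c..b} (\<lambda>t. F t * f t)"
      using m c unfolding mps_def by auto
    moreover have "(\<lambda>x. s x * f x) integrable_on {c..b}" "(\<lambda>x. F x * f x) integrable_on {c..b}"
      using si Fi c by (auto intro: integrable_on_subinterval)
    ultimately show ?thesis unfolding g_def by (simp add: integral_diff)
  qed
  have gac: "integral {a..c} g = - integral {c..b} g"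
    using Henstock_Kurzweil_Integration.integral_combine[where a=a and c=c and b=b and f=g] c gi g0 by auto
  have "J a \<le> J b" using Jm ab by auto
  then have nn: "0 \<le> integral {a..b} (\<lambda>x. J x * g x)"
    using hc gac gc by (simp add: integral_unique algebra_simps mult_right_mono)
  have i1: "((\<lambda>x. J x * (s x * f x)) integrable_on {a..b})"
    using second_mean_value_theorem_full[OF si ab, of J] Jm by blast
  have i2: "((\<lambda>x. J x * (F x * f x)) integrable_on {a..b})"
    using second_mean_value_theorem_full[OF Fi ab, of J] Jm by blast
  have "integral {a..b} (\<lambda>x. J x * g x) =
        integral {a..b} (\<lambda>x. J x * (F x * f x)) - integral {a..b} (\<lambda>x. J x * (s x * f x))"
    unfolding g_def using i1 i2 by (simp add: right_diff_distrib integral_diff)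
  then show ?thesis using nn by (simp add: mult.assoc)
qed

theorem proposition1:
  fixes \<theta>bar :: real and F f v v' v'' :: "real \<Rightarrow> real" and \<theta>0s :: real
  assumes pos: "0 < \<theta>bar"
    and f_cont: "continuous_on {0..\<theta>bar} f"
    and f_pos: "\<forall>t\<in>{0..\<theta>bar}. 0 < f t"
    and F_def: "\<forall>t\<in>{0..\<theta>bar}. F t = integral {0..t} f"
    and F_top: "F \<theta>bar = 1"
    and v_nonneg: "\<forall>t\<in>{0..\<theta>bar}. 0 \<le> v t"
    and v_deriv: "\<forall>t\<in>{0..\<theta>bar}. (v has_real_derivative v' t) (at t within {0..\<theta>bar})"
    and v'_deriv: "\<forall>t\<in>{0..\<theta>bar}. (v' has_real_derivative v'' t) (at t within {0..\<theta>bar})"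
    and v''_cont: "continuous_on {0..\<theta>bar} v''"
    and v'_nonneg: "\<forall>t\<in>{0..\<theta>bar}. 0 \<le> v' t"
    and v''_nonpos: "\<forall>t\<in>{0..\<theta>bar}. v'' t \<le> 0"
    and J_mono: "mono_on {0..\<theta>bar} (virtual_value F f)"
    and opt_mem: "\<theta>0s \<in> {0..<\<theta>bar}"
    and opt_max: "\<forall>\<theta>0\<in>{0..<\<theta>bar}.
        integral {\<theta>0..\<theta>bar} (\<lambda>t. virtual_value F f t * F t * f t) + v \<theta>0 * (1 - F \<theta>0)
        \<le> integral {\<theta>0s..\<theta>bar} (\<lambda>t. virtual_value F f t * F t * f t) + v \<theta>0s * (1 - F \<theta>0s)"
  shows "F \<in> feasible_status F f \<theta>bar \<theta>0s \<and>
         (\<forall>\<theta>0\<in>{0..<\<theta>bar}. \<forall>s\<in>feasible_status F f \<theta>bar \<theta>0.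
            revenue F f v \<theta>bar \<theta>0 s \<le> revenue F f v \<theta>bar \<theta>0s F)"
proof -
  have fi: "f integrable_on {x..y}" if "0 \<le> x" "y \<le> \<theta>bar" for x y
    using that by (intro integrable_continuous_interval continuous_on_subset[OF f_cont]) auto
  have Fm: "F x \<le> F y" if "0 \<le> x" "x \<le> y" "y \<le> \<theta>bar" for x y
  proof -
    have "integral {0..y} f = integral {0..x} f + integral {x..y} f"
      using Henstock_Kurzweil_Integration.integral_combine[where a=0 and c=x and b=y and f=f] that fi[of 0 y] by auto
    moreover have "integral {x..y} f \<ge> 0"
      using f_pos that by (intro integral_nonneg fi) (auto simp: less_imp_le)
    ultimately show ?thesis using F_def that by auto
  qed
  have F0: "F 0 = 0" using F_def pos by auto
  have feas: "F \<in> feasible_status F f \<theta>bar t0" if "t0 \<in> {0..<\<theta>bar}" for t0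
    unfolding feasible_status_def mps_def
  proof (intro CollectI conjI ballI)
    show "mono_on {t0..\<theta>bar} F" using that Fm by (auto intro!: mono_onI)
    fix t assume "t \<in> {t0..\<theta>bar}"
    then show "0 \<le> F t" "F t \<le> 1" using that Fm[of 0 t] Fm[of t \<theta>bar] F0 F_top by auto
  qed auto
  show ?thesis
  proof (intro conjI ballI)
    show "F \<in> feasible_status F f \<theta>bar \<theta>0s" using feas opt_mem .
    fix t0 s assume t0: "t0 \<in> {0..<\<theta>bar}" and s: "s \<in> feasible_status F f \<theta>bar t0"
    have "integral {t0..\<theta>bar} (\<lambda>t. virtual_value F f t * s t * f t)
          \<le> integral {t0..\<theta>bar} (\<lambda>t. virtual_value F f t * F t * f t)"
    proof (rule key_ineq)
      show "t0 \<le> \<theta>bar" using t0 by auto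
      show "virtual_value F f x \<le> virtual_value F f y" if "t0 \<le> x" "x \<le> y" "y \<le> \<theta>bar" for x y
        using J_mono that t0 by (auto elim!: mono_onD)
      show "s x \<le> s y" if "t0 \<le> x" "x \<le> y" "y \<le> \<theta>bar" for x y
        using s that unfolding feasible_status_def by (auto elim!: mono_onD)
      show "F x \<le> F y" if "t0 \<le> x" "x \<le> y" "y \<le> \<theta>bar" for x y
        using Fm that t0 by auto
      show "f integrable_on {t0..\<theta>bar}" using fi t0 by auto
      show "mps f t0 \<theta>bar s F" using s unfolding feasible_status_def by auto
    qed
    then show "revenue F f v \<theta>bar t0 s \<le> revenue F f v \<theta>bar \<theta>0s F"
      using opt_max t0 unfolding revenue_def by fastforce
  qed
qed

end
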